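(* Let $G$ be a finitely generated group, $N$ a characteristic subgroup of $G$, and $Q=G/N$. Then $\alpha_Q\preccurlyeq\alpha_G$.
   Context: For a finitely generated group $G$ with finite generating set $\Sigma$, the automorphic growth function sends $n$ to the number of $\operatorname{Aut}(G)$-orbits of $G$ containing an element of word length at most $n$; $\alpha_G$ denotes its class under $\sim$ (independent of $\Sigma$). For non-decreasing non-zero $f,g\colon\mathbb{N}\to\mathbb{N}$, $f\preccurlyeq g$ means there is $\lambda\in\mathbb{N}\setminus\{0\}$ with $f(n)\le\lambda g(\lambda n+\lambda)+\lambda$ for all $n$, and $f\sim g$ means both $f\preccurlyeq g$ and $g\preccurlyeq f$; $\preccurlyeq$ induces a partial order on $\sim$-classes. *)

theory Defs
  imports "HOL-Algebra.Algebra"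
begin

definition word_ball :: "('a, 'b) monoid_scheme \<Rightarrow> 'a set \<Rightarrow> nat \<Rightarrow> 'a set" where
  "word_ball G S n = {foldr (\<otimes>\<^bsub>G\<^esub>) xs \<one>\<^bsub>G\<^esub> | xs.
      length xs \<le> n \<and> set xs \<subseteq> S \<union> (\<lambda>s. inv\<^bsub>G\<^esub> s) ` S}"

definition aut_orbit :: "('a, 'b) monoid_scheme \<Rightarrow> 'a \<Rightarrow> 'a set" where
  "aut_orbit G g = (\<lambda>\<phi>. \<phi> g) ` auto G"

definition aut_growth :: "('a, 'b) monoid_scheme \<Rightarrow> 'a set \<Rightarrow> nat \<Rightarrow> nat" where
  "aut_growth G S n = card (aut_orbit G ` word_ball G S n)"

definition growth_le :: "(nat \<Rightarrow> nat) \<Rightarrow> (nat \<Rightarrow> nat) \<Rightarrow> bool" (infix \<open>\<preccurlyeq>\<close> 50) where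
  "f \<preccurlyeq> g \<longleftrightarrow> (\<exists>c::nat. c \<noteq> 0 \<and> (\<forall>n. f n \<le> c * g (c * n + c) + c))"

definition finite_gen_set :: "('a, 'b) monoid_scheme \<Rightarrow> 'a set \<Rightarrow> bool" where
  "finite_gen_set G S \<longleftrightarrow> finite S \<and> S \<subseteq> carrier G \<and> generate G S = carrier G"

definition characteristic :: "'a set \<Rightarrow> ('a, 'b) monoid_scheme \<Rightarrow> bool" where
  "characteristic N G \<longleftrightarrow> subgroup N G \<and> (\<forall>\<phi>\<in>auto G. \<phi> ` N = N)"

end

theory Submission
  imports Defs
begin

lemma wb_mono: "m \<le> n \<Longrightarrow> word_ball G S m \<subseteq> word_ball G S n"
  unfolding word_ball_def by force

lemma wb_finite: assumes "finite S" shows "finite (word_ball G S n)"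
proof -
  have "word_ball G S n = (\<lambda>xs. foldr (\<otimes>\<^bsub>G\<^esub>) xs \<one>\<^bsub>G\<^esub>) ` {xs. set xs \<subseteq> S \<union> (\<lambda>s. inv\<^bsub>G\<^esub> s) ` S \<and> length xs \<le> n}"
    unfolding word_ball_def by blast
  then show ?thesis using finite_lists_length_le[of "S \<union> (\<lambda>s. inv\<^bsub>G\<^esub> s) ` S" n] assms by simp
qed

lemma foldr_closed: assumes "group G" "set xs \<subseteq> carrier G" "y \<in> carrier G"
  shows "foldr (\<otimes>\<^bsub>G\<^esub>) xs y \<in> carrier G"
  using assms(2,3) by (induction xs) (auto intro: group.subgroup_self[OF assms(1), THEN subgroup.m_closed])

lemma foldr_mult: assumes "group G" "set xs \<subseteq> carrier G" "y \<in> carrier G"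
  shows "foldr (\<otimes>\<^bsub>G\<^esub>) xs y = foldr (\<otimes>\<^bsub>G\<^esub>) xs \<one>\<^bsub>G\<^esub> \<otimes>\<^bsub>G\<^esub> y"
  using assms(2,3)
proof (induction xs)
  case Nil then show ?case using assms(1) by (simp add: group.is_monoid monoid.l_one)
next
  case (Cons a xs)
  have c: "foldr (\<otimes>\<^bsub>G\<^esub>) xs \<one>\<^bsub>G\<^esub> \<in> carrier G"
    using foldr_closed[OF assms(1), of xs] Cons.prems assms(1) by (simp add: group.is_monoid monoid.one_closed)
  show ?case using Cons c assms(1) by (simp add: group.is_monoid monoid.m_assoc)
qed

lemma gen_set_sub: assumes "group G" "S \<subseteq> carrier G"
  shows "S \<union> (\<lambda>s. inv\<^bsub>G\<^esub> s) ` S \<subseteq> carrier G"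
  using assms by (auto intro: group.inv_closed)

lemma wb_carrier: assumes "group G" "S \<subseteq> carrier G" shows "word_ball G S n \<subseteq> carrier G"
proof
  fix x assume "x \<in> word_ball G S n"
  then obtain xs where xs: "x = foldr (\<otimes>\<^bsub>G\<^esub>) xs \<one>\<^bsub>G\<^esub>" "set xs \<subseteq> S \<union> (\<lambda>s. inv\<^bsub>G\<^esub> s) ` S"
    unfolding word_ball_def by blast
  have "\<one>\<^bsub>G\<^esub> \<in> carrier G" using assms(1) by (simp add: group.is_monoid monoid.one_closed)
  then show "x \<in> carrier G" using foldr_closed[OF assms(1), of xs] xs gen_set_sub[OF assms] by blast
qed

lemma wb_mult: assumes "group G" "S \<subseteq> carrier G" "x \<in> word_ball G S a" "y \<in> word_ball G S b"
  shows "x \<otimes>\<^bsub>G\<^esub> y \<in> word_ball G S (a + b)"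
proof -
  obtain xs where xs: "x = foldr (\<otimes>\<^bsub>G\<^esub>) xs \<one>\<^bsub>G\<^esub>" "length xs \<le> a" "set xs \<subseteq> S \<union> (\<lambda>s. inv\<^bsub>G\<^esub> s) ` S"
    using assms(3) unfolding word_ball_def by blast
  obtain ys where ys: "y = foldr (\<otimes>\<^bsub>G\<^esub>) ys \<one>\<^bsub>G\<^esub>" "length ys \<le> b" "set ys \<subseteq> S \<union> (\<lambda>s. inv\<^bsub>G\<^esub> s) ` S"
    using assms(4) unfolding word_ball_def by blast
  have yc: "y \<in> carrier G" using wb_carrier[OF assms(1,2)] assms(4) by blast
  have "set xs \<subseteq> carrier G" using xs(3) gen_set_sub[OF assms(1,2)] by blast
  have "foldr (\<otimes>\<^bsub>G\<^esub>) (xs @ ys) \<one>\<^bsub>G\<^esub> = x \<otimes>\<^bsub>G\<^esub> y"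
    using foldr_mult[OF assms(1), of xs y] \<open>set xs \<subseteq> carrier G\<close> xs ys yc by (simp add: foldr_append)
  then show ?thesis unfolding word_ball_def using xs ys
    by (intro CollectI exI[of _ "xs @ ys"]) auto
qed

lemma wb_one: "\<one>\<^bsub>G\<^esub> \<in> word_ball G S n"
  unfolding word_ball_def by (intro CollectI exI[of _ "[]"]) auto

lemma wb_letter: assumes "group G" "S \<subseteq> carrier G" "x \<in> S \<union> (\<lambda>s. inv\<^bsub>G\<^esub> s) ` S"
  shows "x \<in> word_ball G S 1"
proof -
  have "foldr (\<otimes>\<^bsub>G\<^esub>) [x] \<one>\<^bsub>G\<^esub> = x" using assms gen_set_sub[OF assms(1,2)]
    by (auto simp: group.is_monoid monoid.r_one)
  then show ?thesis unfolding word_ball_def using assms(3)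
    by (intro CollectI exI[of _ "[x]"]) auto
qed

lemma wb_inv: assumes "group G" "S \<subseteq> carrier G" "g \<in> word_ball G S k"
  shows "inv\<^bsub>G\<^esub> g \<in> word_ball G S k"
proof -
  have L: "inv\<^bsub>G\<^esub> (foldr (\<otimes>\<^bsub>G\<^esub>) xs \<one>\<^bsub>G\<^esub>) \<in> word_ball G S (length xs)"
    if "set xs \<subseteq> S \<union> (\<lambda>s. inv\<^bsub>G\<^esub> s) ` S" for xs
    using that
  proof (induction xs)
    case Nil then show ?case using assms(1) wb_one[of G S 0] by (simp add: group.is_monoid monoid.inv_one)
  next
    case (Cons x xs)
    have xc: "x \<in> carrier G" using Cons.prems gen_set_sub[OF assms(1,2)] by auto
    have "set xs \<subseteq> carrier G" using Cons.prems gen_set_sub[OF assms(1,2)] by auto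
    have rc: "foldr (\<otimes>\<^bsub>G\<^esub>) xs \<one>\<^bsub>G\<^esub> \<in> carrier G"
      using foldr_closed[OF assms(1) \<open>set xs \<subseteq> carrier G\<close>] assms(1)
      by (simp add: group.is_monoid monoid.one_closed)
    have ix: "inv\<^bsub>G\<^esub> x \<in> S \<union> (\<lambda>s. inv\<^bsub>G\<^esub> s) ` S"
      using Cons.prems assms(1,2) by (auto simp: group.inv_inv subsetD)
    have "inv\<^bsub>G\<^esub> (foldr (\<otimes>\<^bsub>G\<^esub>) xs \<one>\<^bsub>G\<^esub>) \<otimes>\<^bsub>G\<^esub> inv\<^bsub>G\<^esub> x \<in> word_ball G S (length xs + 1)"
      using Cons(1)[OF Cons.prems[THEN subset_trans[OF set_subset_Cons]]] wb_mult[OF assms(1,2)] wb_letter[OF assms(1,2) ix] by blast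
    then show ?case using assms(1) xc rc by (simp add: group.inv_mult_group)
  qed
  obtain xs where xs: "g = foldr (\<otimes>\<^bsub>G\<^esub>) xs \<one>\<^bsub>G\<^esub>" "length xs \<le> k" "set xs \<subseteq> S \<union> (\<lambda>s. inv\<^bsub>G\<^esub> s) ` S"
    using assms(3) unfolding word_ball_def by blast
  then show ?thesis using L[of xs] wb_mono[of "length xs" k G S] by auto
qed

lemma gen_wb: assumes "group G" "S \<subseteq> carrier G" "g \<in> generate G S"
  shows "\<exists>n. g \<in> word_ball G S n"
  using assms(3)
proof (induction rule: generate.induct)
  case one then show ?case using wb_one by blast
next
  case (incl h) then show ?case using wb_letter[OF assms(1,2)] by blast
next
  case (inv h) then show ?case using wb_letter[OF assms(1,2)] by blast
next
  case (eng h1 h2) then show ?case using wb_mult[OF assms(1,2)] by blast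
qed


lemma auto_compose: assumes "group H" "\<psi> \<in> auto H" "\<theta> \<in> auto H"
  shows "compose (carrier H) \<psi> \<theta> \<in> auto H"
proof -
  have "\<psi> \<otimes>\<^bsub>BijGroup (carrier H)\<^esub> \<theta> \<in> auto H"
    using subgroup.m_closed[OF group.subgroup_auto[OF assms(1)] assms(2,3)] .
  moreover have "auto H \<subseteq> Bij (carrier H)" by (simp add: auto_def)
  moreover have "\<psi> \<in> Bij (carrier H)" "\<theta> \<in> Bij (carrier H)" using assms(2,3) calculation(2) by auto
  ultimately show ?thesis by (simp add: BijGroup_def)
qed

lemma (in group) char_normal: assumes "characteristic N G" shows "N \<lhd> G"
proof -
  have sg: "subgroup N G" using assms by (simp add: characteristic_def)
  have "x \<otimes> h \<otimes> inv x \<in> N" if x: "x \<in> carrier G" and h: "h \<in> N" for x h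
  proof -
    define \<phi> where "\<phi> = (\<lambda>y\<in>carrier G. x \<otimes> y \<otimes> inv x)"
    have hom: "\<phi> \<in> hom G G"
    proof (rule homI)
      fix a assume "a \<in> carrier G" then show "\<phi> a \<in> carrier G" using x by (simp add: \<phi>_def)
    next
      fix a b assume ab: "a \<in> carrier G" "b \<in> carrier G"
      have "x \<otimes> (a \<otimes> b) \<otimes> inv x = (x \<otimes> a \<otimes> inv x) \<otimes> (x \<otimes> b \<otimes> inv x)"
        using x ab by (simp add: m_assoc l_inv_ex inv_closed flip: m_assoc[of "inv x" x])
      then show "\<phi> (a \<otimes> b) = \<phi> a \<otimes> \<phi> b" using ab by (simp add: \<phi>_def)
    qed
    have inj: "inj_on \<phi> (carrier G)"
    proof (rule inj_onI)
      fix a b assume ab: "a \<in> carrier G" "b \<in> carrier G" "\<phi> a = \<phi> b"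
      then have "x \<otimes> a \<otimes> inv x = x \<otimes> b \<otimes> inv x" by (simp add: \<phi>_def)
      then show "a = b" using ab x by simp
    qed
    have surj: "\<phi> ` carrier G = carrier G"
    proof
      show "\<phi> ` carrier G \<subseteq> carrier G" using hom by (rule hom_carrier)
      show "carrier G \<subseteq> \<phi> ` carrier G"
      proof
        fix z assume z: "z \<in> carrier G"
        have e: "x \<otimes> (inv x \<otimes> z) = z" using x z by (metis inv_closed m_assoc r_inv l_one)
        have e2: "x \<otimes> (inv x \<otimes> z \<otimes> x) \<otimes> inv x = z" using x z e by (simp add: m_assoc)
        have "inv x \<otimes> z \<otimes> x \<in> carrier G" using x z by simp
        then have "\<phi> (inv x \<otimes> z \<otimes> x) = z" using e2 by (simp add: \<phi>_def)
        moreover have "inv x \<otimes> z \<otimes> x \<in> carrier G" using x z by simp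
        ultimately show "z \<in> \<phi> ` carrier G" by (metis imageI)
      qed
    qed
    have "\<phi> \<in> extensional (carrier G)" by (simp add: \<phi>_def)
    then have "\<phi> \<in> auto G" unfolding auto_def Bij_def using hom inj surj
      by (simp add: bij_betw_def)
    then have phiN: "\<phi> ` N = N" using assms by (simp add: characteristic_def)
    have hc: "h \<in> carrier G" using subgroup.mem_carrier[OF sg h] .
    have "\<phi> h \<in> \<phi> ` N" using h by (rule imageI)
    then have "\<phi> h \<in> N" using phiN by simp
    moreover have "\<phi> h = x \<otimes> h \<otimes> inv x" using hc by (simp add: \<phi>_def)
    ultimately show ?thesis by simp
  qed
  then show ?thesis using sg normal_inv_iff by blast
qed

lemma (in group) auto_image_coset: assumes "characteristic N G" "\<phi> \<in> auto G" "g \<in> carrier G"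
  shows "\<phi> ` (N #> g) = N #> (\<phi> g)"
proof -
  have phiN: "\<phi> ` N = N" using assms(1,2) by (simp add: characteristic_def)
  have Nc: "N \<subseteq> carrier G" using assms(1) by (simp add: characteristic_def subgroup.subset)
  have hom: "\<phi> \<in> hom G G" using assms(2) by (simp add: auto_def)
  have "\<phi> ` (N #> g) = (\<lambda>h. \<phi> (h \<otimes> g)) ` N" unfolding r_coset_def by auto
  also have "\<dots> = (\<lambda>h. \<phi> h \<otimes> \<phi> g) ` N"
  proof (rule image_cong[OF refl])
    fix h assume "h \<in> N" then have "h \<in> carrier G" using Nc by blast
    then show "\<phi> (h \<otimes> g) = \<phi> h \<otimes> \<phi> g" using hom assms(3) by (simp add: hom_def)
  qed
  also have "\<dots> = (\<lambda>h. h \<otimes> \<phi> g) ` (\<phi> ` N)" by (simp add: image_image)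
  also have "\<dots> = N #> (\<phi> g)" unfolding phiN r_coset_def by auto
  finally show ?thesis .
qed

lemma (in group) induced_auto: assumes "characteristic N G" "\<phi> \<in> auto G"
  shows "restrict (image \<phi>) (carrier (G Mod N)) \<in> auto (G Mod N)"
proof -
  interpret normal N G using char_normal[OF assms(1)] .
  have hom: "\<phi> \<in> hom G G" using assms(2) by (simp add: auto_def)
  have bij: "bij_betw \<phi> (carrier G) (carrier G)" using assms(2) by (simp add: auto_def Bij_def)
  have img: "\<phi> ` (N #> g) = N #> (\<phi> g)" if "g \<in> carrier G" for g
    using auto_image_coset[OF assms that] .
  have phic: "\<phi> g \<in> carrier G" if "g \<in> carrier G" for g using hom that by (rule hom_in_carrier)
  let ?f = "restrict (image \<phi>) (carrier (G Mod N))"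
  have car: "carrier (G Mod N) = (\<lambda>x. N #> x) ` carrier G" by (rule carrier_FactGroup)
  have carI: "N #> x \<in> carrier (G Mod N)" if "x \<in> carrier G" for x
    using that unfolding car by (rule imageI)
  have h1: "?f \<in> hom (G Mod N) (G Mod N)"
  proof (rule homI)
    fix U assume U: "U \<in> carrier (G Mod N)"
    then obtain x where x: "x \<in> carrier G" "U = N #> x" using car by auto
    have "?f U = N #> (\<phi> x)" using U x img by simp
    then show "?f U \<in> carrier (G Mod N)" using carI phic x by simp
  next
    fix U V assume UV: "U \<in> carrier (G Mod N)" "V \<in> carrier (G Mod N)"
    then obtain x y where x: "x \<in> carrier G" "U = N #> x" and y: "y \<in> carrier G" "V = N #> y"
      using car by auto
    have UVc: "U \<otimes>\<^bsub>G Mod N\<^esub> V = N #> (x \<otimes> y)" using x y rcos_sum by simp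
    have xy: "x \<otimes> y \<in> carrier G" using x y by simp
    have "?f (U \<otimes>\<^bsub>G Mod N\<^esub> V) = N #> (\<phi> (x \<otimes> y))"
      using UVc img[OF xy] carI[OF xy] by simp
    also have "\<dots> = (N #> (\<phi> x)) <#> (N #> (\<phi> y))"
      using hom x y phic rcos_sum by (simp add: hom_def)
    also have "\<dots> = ?f U \<otimes>\<^bsub>G Mod N\<^esub> ?f V" using UV x y img by simp
    finally show "?f (U \<otimes>\<^bsub>G Mod N\<^esub> V) = ?f U \<otimes>\<^bsub>G Mod N\<^esub> ?f V" .
  qed
  have sub: "carrier (G Mod N) \<subseteq> Pow (carrier G)"
  proof
    fix U assume "U \<in> carrier (G Mod N)"
    then obtain x where x: "x \<in> carrier G" "U = N #> x" using car by auto
    then show "U \<in> Pow (carrier G)" using r_coset_subset_G[OF subset x(1)] by simp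
  qed
  have inj: "inj_on ?f (carrier (G Mod N))"
  proof -
    have "inj_on \<phi> (carrier G)" using bij by (simp add: bij_betw_def)
    then have "inj_on (image \<phi>) (Pow (carrier G))" by (rule inj_on_image_Pow)
    then have "inj_on (image \<phi>) (carrier (G Mod N))" using sub by (rule inj_on_subset)
    then show ?thesis by (simp add: inj_on_def)
  qed
  have surj: "?f ` carrier (G Mod N) = carrier (G Mod N)"
  proof
    show "?f ` carrier (G Mod N) \<subseteq> carrier (G Mod N)" using h1 by (rule hom_carrier)
    show "carrier (G Mod N) \<subseteq> ?f ` carrier (G Mod N)"
    proof
      fix V assume "V \<in> carrier (G Mod N)"
      then obtain y where y: "y \<in> carrier G" "V = N #> y" using car by auto
      then obtain x where x: "x \<in> carrier G" "y = \<phi> x" using bij unfolding bij_betw_def by auto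
      have c: "N #> x \<in> carrier (G Mod N)" using carI x(1) .
      moreover have "?f (N #> x) = V" using c img x y by simp
      ultimately show "V \<in> ?f ` carrier (G Mod N)" by (metis imageI)
    qed
  qed
  have "?f \<in> extensional (carrier (G Mod N))" by simp
  then show ?thesis unfolding auto_def Bij_def using h1 inj surj by (simp add: bij_betw_def)
qed


lemma (in group) main_aux:
  assumes "finite_gen_set G S"
    and "characteristic N G"
    and "finite_gen_set (G Mod N) T"
  shows "aut_growth (G Mod N) T \<preccurlyeq> aut_growth G S"
proof -
  interpret normal N G using char_normal[OF assms(2)] .
  define Q where "Q = G Mod N"
  have gQ: "group Q" unfolding Q_def by (rule factorgroup_is_group)
  have hom\<pi>: "(\<lambda>a. N #> a) \<in> hom G Q" unfolding Q_def by (rule r_coset_hom_Mod)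
  interpret gh: group_hom G Q "\<lambda>a. N #> a"
    using gQ hom\<pi> by (simp add: group_hom_def group_hom_axioms_def is_group)
  have car: "carrier Q = (\<lambda>x. N #> x) ` carrier G" unfolding Q_def by (rule carrier_FactGroup)
  have Sfin: "finite S" and Sc: "S \<subseteq> carrier G" and gen: "generate G S = carrier G"
    using assms(1) by (auto simp: finite_gen_set_def)
  have Tfin: "finite T" and Tc: "T \<subseteq> carrier Q"
    using assms(3) by (auto simp: finite_gen_set_def Q_def)
  have "\<forall>t\<in>T. \<exists>k. \<exists>w\<in>word_ball G S k. N #> w = t"
  proof
    fix t assume "t \<in> T"
    then have "t \<in> carrier Q" using Tc by blast
    then obtain g where g: "g \<in> carrier G" "t = N #> g" using car by auto
    then obtain k where "g \<in> word_ball G S k" using gen_wb[OF is_group Sc] gen by auto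
    then show "\<exists>k. \<exists>w\<in>word_ball G S k. N #> w = t" using g by blast
  qed
  then obtain k where k: "\<forall>t\<in>T. \<exists>w\<in>word_ball G S (k t). N #> w = t" by metis
  define K where "K = sum k T"
  have kK: "\<exists>w\<in>word_ball G S K. N #> w = t" if "t \<in> T" for t
  proof -
    have "k t \<le> K" unfolding K_def using that Tfin by (intro member_le_sum) auto
    then show ?thesis using k that wb_mono[of "k t" K G S] by blast
  qed
  have letter: "\<exists>w\<in>word_ball G S K. N #> w = l" if lmem: "l \<in> T \<union> (\<lambda>s. inv\<^bsub>Q\<^esub> s) ` T" for l
  proof (cases "l \<in> T")
    case True then show ?thesis using kK by blast
  next
    case False
    then obtain t where t: "t \<in> T" "l = inv\<^bsub>Q\<^esub> t" using lmem by blast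
    then obtain w where w: "w \<in> word_ball G S K" "N #> w = t" using kK by blast
    have wc: "w \<in> carrier G" using w(1) wb_carrier[OF is_group Sc] by blast
    have "N #> (inv w) = l" using gh.hom_inv[OF wc] w t by simp
    moreover have "inv w \<in> word_ball G S K" using wb_inv[OF is_group Sc w(1)] .
    ultimately show ?thesis by blast
  qed
  have ball: "foldr (\<otimes>\<^bsub>Q\<^esub>) ls \<one>\<^bsub>Q\<^esub> \<in> (\<lambda>a. N #> a) ` word_ball G S (K * length ls)"
    if "set ls \<subseteq> T \<union> (\<lambda>s. inv\<^bsub>Q\<^esub> s) ` T" for ls
    using that
  proof (induction ls)
    case Nil
    have "foldr (\<otimes>\<^bsub>Q\<^esub>) [] \<one>\<^bsub>Q\<^esub> = N #> \<one>" using subset by (simp add: Q_def)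
    then show ?case using wb_one[of G S "K * length []"] by (rule image_eqI)
  next
    case (Cons l ls)
    obtain w where w: "w \<in> word_ball G S K" "N #> w = l" using letter[of l] Cons.prems by auto
    obtain v where v: "v \<in> word_ball G S (K * length ls)" "foldr (\<otimes>\<^bsub>Q\<^esub>) ls \<one>\<^bsub>Q\<^esub> = N #> v"
      using Cons by auto
    have wc: "w \<in> carrier G" using w(1) wb_carrier[OF is_group Sc] by blast
    have vc: "v \<in> carrier G" using v(1) wb_carrier[OF is_group Sc] by blast
    have "foldr (\<otimes>\<^bsub>Q\<^esub>) (l # ls) \<one>\<^bsub>Q\<^esub> = N #> (w \<otimes> v)"
      using gh.hom_mult[OF wc vc] w v by simp
    moreover have "w \<otimes> v \<in> word_ball G S (K * length (l # ls))"
      using wb_mult[OF is_group Sc w(1) v(1)] by simp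
    ultimately show ?case by blast
  qed
  define c where "c = K + 1"
  have ballQ: "word_ball Q T n \<subseteq> (\<lambda>a. N #> a) ` word_ball G S (c * n + c)" for n
  proof
    fix x assume "x \<in> word_ball Q T n"
    then obtain ls where ls: "x = foldr (\<otimes>\<^bsub>Q\<^esub>) ls \<one>\<^bsub>Q\<^esub>" "length ls \<le> n"
      "set ls \<subseteq> T \<union> (\<lambda>s. inv\<^bsub>Q\<^esub> s) ` T" unfolding word_ball_def by blast
    have "K * length ls \<le> K * n" using ls(2) by simp
    also have "\<dots> \<le> c * n + c" unfolding c_def by simp
    finally have "K * length ls \<le> c * n + c" .
    then show "x \<in> (\<lambda>a. N #> a) ` word_ball G S (c * n + c)"
      using ball[OF ls(3)] ls(1) wb_mono[of "K * length ls" "c * n + c" G S] by blast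
  qed
  have orb_sub: "aut_orbit Q (N #> (\<phi> g)) \<subseteq> aut_orbit Q (N #> g)"
    if g: "g \<in> carrier G" and \<phi>: "\<phi> \<in> auto G" for g \<phi>
  proof
    fix y assume "y \<in> aut_orbit Q (N #> (\<phi> g))"
    then obtain \<psi> where \<psi>: "\<psi> \<in> auto Q" "y = \<psi> (N #> (\<phi> g))" unfolding aut_orbit_def by blast
    define \<phi>' where "\<phi>' = restrict (image \<phi>) (carrier Q)"
    have \<phi>'a: "\<phi>' \<in> auto Q" unfolding \<phi>'_def Q_def using induced_auto[OF assms(2) \<phi>] .
    have gQc: "N #> g \<in> carrier Q" using car g by blast
    have "\<phi>' (N #> g) = N #> (\<phi> g)" unfolding \<phi>'_def using gQc auto_image_coset[OF assms(2) \<phi> g] by simp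
    then have "compose (carrier Q) \<psi> \<phi>' (N #> g) = y" using gQc \<psi> by (simp add: compose_def)
    moreover have "compose (carrier Q) \<psi> \<phi>' \<in> auto Q" using auto_compose[OF gQ \<psi>(1) \<phi>'a] .
    ultimately show "y \<in> aut_orbit Q (N #> g)" unfolding aut_orbit_def by (metis image_eqI)
  qed
  have self: "g \<in> aut_orbit G g" if "g \<in> carrier G" for g
  proof -
    have "(\<lambda>x\<in>carrier G. x) g = g" using that by simp
    then show ?thesis unfolding aut_orbit_def using id_in_auto by (metis image_eqI)
  qed
  have orbG_mem: "\<exists>\<phi>\<in>auto G. h = \<phi> g" if "h \<in> aut_orbit G g" for g h
    using that unfolding aut_orbit_def by blast
  have wd: "aut_orbit Q (N #> g) = aut_orbit Q (N #> h)"
    if g: "g \<in> carrier G" and h: "h \<in> carrier G" and eq: "aut_orbit G g = aut_orbit G h" for g h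
  proof
    obtain \<phi> where \<phi>: "\<phi> \<in> auto G" "h = \<phi> g" using orbG_mem self[OF h] eq by metis
    show "aut_orbit Q (N #> h) \<subseteq> aut_orbit Q (N #> g)" using orb_sub[OF g \<phi>(1)] \<phi>(2) by simp
    obtain \<psi> where \<psi>: "\<psi> \<in> auto G" "g = \<psi> h" using orbG_mem self[OF g] eq by metis
    show "aut_orbit Q (N #> g) \<subseteq> aut_orbit Q (N #> h)" using orb_sub[OF h \<psi>(1)] \<psi>(2) by simp
  qed
  have main: "aut_growth Q T n \<le> aut_growth G S (c * n + c)" for n
  proof -
    define B where "B = word_ball G S (c * n + c)"
    have Bfin: "finite B" unfolding B_def using wb_finite[OF Sfin] .
    have Bc: "B \<subseteq> carrier G" unfolding B_def using wb_carrier[OF is_group Sc] .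
    define F where "F = (\<lambda>Ob. aut_orbit Q (N #> (SOME g. g \<in> B \<and> aut_orbit G g = Ob)))"
    have sub1: "aut_orbit Q ` word_ball Q T n \<subseteq> (\<lambda>g. aut_orbit Q (N #> g)) ` B"
      using ballQ[of n] unfolding B_def by blast
    have eqF: "(\<lambda>g. aut_orbit Q (N #> g)) ` B = F ` (aut_orbit G ` B)"
    proof -
      have "F (aut_orbit G g) = aut_orbit Q (N #> g)" if "g \<in> B" for g
      proof -
        have ex: "\<exists>g'. g' \<in> B \<and> aut_orbit G g' = aut_orbit G g" using that by blast
        define g' where "g' = (SOME g'. g' \<in> B \<and> aut_orbit G g' = aut_orbit G g)"
        have g': "g' \<in> B" "aut_orbit G g' = aut_orbit G g"
          using someI_ex[OF ex] unfolding g'_def by blast+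
        have "F (aut_orbit G g) = aut_orbit Q (N #> g')" unfolding F_def g'_def by simp
        also have "\<dots> = aut_orbit Q (N #> g)" using wd[OF _ _ g'(2)] g'(1) that Bc by blast
        finally show ?thesis .
      qed
      then show ?thesis by (simp add: image_image cong: image_cong)
    qed
    have "aut_growth Q T n = card (aut_orbit Q ` word_ball Q T n)" by (simp add: aut_growth_def)
    also have "\<dots> \<le> card ((\<lambda>g. aut_orbit Q (N #> g)) ` B)"
      using sub1 Bfin by (intro card_mono) auto
    also have "\<dots> = card (F ` (aut_orbit G ` B))" using eqF by simp
    also have "\<dots> \<le> card (aut_orbit G ` B)" using Bfin by (intro card_image_le) auto
    also have "\<dots> = aut_growth G S (c * n + c)" by (simp add: aut_growth_def B_def)
    finally show ?thesis .
  qed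
  have "aut_growth Q T n \<le> c * aut_growth G S (c * n + c) + c" for n
  proof -
    have "aut_growth G S (c * n + c) \<le> c * aut_growth G S (c * n + c)" unfolding c_def by simp
    then show ?thesis using main[of n] by linarith
  qed
  then show ?thesis unfolding growth_le_def Q_def[symmetric] c_def by (intro exI[of _ "K + 1"]) (simp add: c_def)
qed

theorem mainTheorem13:
  fixes G :: "('a, 'b) monoid_scheme" and N :: "'a set"
    and S :: "'a set" and T :: "'a set set"
  assumes "group G"
    and "finite_gen_set G S"
    and "characteristic N G"
    and "finite_gen_set (G Mod N) T"
  shows "aut_growth (G Mod N) T \<preccurlyeq> aut_growth G S"
  using group.main_aux[OF assms] .

end
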